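(* Let $\mathbf{s}=(s_1,\dots,s_k)$ be a switch pattern, $l\in\{1,\dots,k\}$, and $\alpha,\beta\ge0$ with $\alpha+\beta\le n$. Then $$g^{(l)}_{\alpha,\beta,\mathbf{s}}=f_{\alpha,\beta,\mathbf{s}_l}\,p_{\alpha,\beta}(\mathbf{s},l),\qquad p_{\alpha,\beta}(\mathbf{s},l)=\frac{(n-s_l)_\alpha(s_l)_\beta}{(n)_{\alpha+\beta}},$$ where $f_{\alpha,\beta,\mathbf{s}_l}=\frac{1}{2^b}\sum_{j=0}^b\binom bj a_{\alpha,\beta}(j)\lambda_{n,j,\mathbf{s}_l}$ with $b=\alpha+\beta$, $a_{\alpha,0}\equiv1$ and $a_{\alpha,\beta}(j)=\frac{b-j}{b}a_{\alpha,\beta-1}(j)-\frac jba_{\alpha,\beta-1}(j-1)$ for $\beta\ge1$. For $0\le\alpha+\beta\le4$ these sequences are: $a_{0,0}(j)=1$; $a_{0,1}(j)=(-1)^j$, $a_{1,0}(j)=1$; $a_{0,2}(j)=(-1)^j$, $a_{1,1}(j)=1-j$, $a_{2,0}(j)=1$; $a_{0,3}(j)=(-1)^j$, $a_{1,2}(j)=(-1)^j(1-2j/3)$, $a_{2,1}(j)=1-2j/3$, $a_{3,0}(j)=1$; $a_{0,4}(j)=(-1)^j$, $a_{1,3}(j)=(-1)^j(1-j/2)$, $a_{2,2}(j)=1-j(4-j)/3$, $a_{3,1}(j)=1-j/2$, $a_{4,0}(j)=1$.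
   Context: Lightbulb process on $n$ bulbs with $k$ stages and switch pattern $\mathbf{s}$: all bulbs initially off unless stated; at stage $r$ a uniformly random subset of exactly $s_r$ bulbs is toggled, independently across stages; $X_{rj}=1$ iff bulb $j$ is toggled at stage $r$ ($X_{0j}$ denotes the deterministic initial status), and $X_j=(\sum_{r=0}^kX_{rj})\bmod 2$ indicates bulb $j$ is on at the end. Define, for all bulbs initially off, $g^{(l)}_{\alpha,\beta,\mathbf{s}}=P(X_1=\dots=X_{\alpha+\beta}=0,\ X_{l1}=\dots=X_{l\alpha}=0,\ X_{l,\alpha+1}=\dots=X_{l,\alpha+\beta}=1)$. For a pattern $\mathbf{t}$, $f_{\alpha,\beta,\mathbf{t}}=P(X_i=0,\ i=1,\dots,\alpha+\beta\mid X_{0i}=0,\ i\le\alpha;\ X_{0i}=1,\ \alpha<i\le\alpha+\beta)$ for the process with pattern $\mathbf{t}$. $\mathbf{s}_l=(s_1,\dots,s_{l-1},s_{l+1},\dots,s_k)$. $(n)_t=n(n-1)\cdots(n-t+1)$, $\lambda_{n,j,s}=\sum_{t=0}^j\binom jt(-2)^t\frac{(s)_t}{(n)_t}$, $\lambda_{n,j,\mathbf{t}}=\prod_r\lambda_{n,j,t_r}$. *)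

theory Defs
  imports "HOL-Probability.Probability"
begin

text \<open>Bulbs are indexed 0..n-1 (bulb j of the paper is index j-1); stages are the
  entries of the list s (stage r of the paper is index r-1). An outcome of the
  switching is a list S of subsets of bulbs, S!(r-1) being the bulbs toggled at stage r.\<close>

definition switch_space :: "nat \<Rightarrow> nat list \<Rightarrow> nat set list set" where
  "switch_space n s = {S. length S = length s \<and>
     (\<forall>r<length s. S ! r \<subseteq> {..<n} \<and> card (S ! r) = s ! r)}"

text \<open>Independent uniformly random subsets of the prescribed sizes at each stage
  = uniform distribution on the product set.\<close>
definition switch_pmf :: "nat \<Rightarrow> nat list \<Rightarrow> nat set list pmf" where
  "switch_pmf n s = pmf_of_set (switch_space n s)"

definition toggles :: "nat set list \<Rightarrow> nat \<Rightarrow> nat" where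
  "toggles S j = length (filter (\<lambda>A. j \<in> A) S)"

text \<open>Final status of bulb j given initial statuses x0 (True = on).\<close>
definition final_on :: "(nat \<Rightarrow> bool) \<Rightarrow> nat set list \<Rightarrow> nat \<Rightarrow> bool" where
  "final_on x0 S j = odd ((if x0 j then 1 else 0) + toggles S j)"

text \<open>f_{alpha,beta,t}: bulbs 1..alpha initially off, alpha+1..alpha+beta initially on;
  probability that bulbs 1..alpha+beta are all off at the end.\<close>
definition f_prob :: "nat \<Rightarrow> nat \<Rightarrow> nat \<Rightarrow> nat list \<Rightarrow> real" where
  "f_prob n \<alpha> \<beta> t = measure_pmf.prob (switch_pmf n t)
     {S. \<forall>i<\<alpha>+\<beta>. \<not> final_on (\<lambda>i. \<alpha> \<le> i) S i}"

text \<open>g^{(l)}_{alpha,beta,s} (l is 1-based), all bulbs initially off.\<close>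
definition g_prob :: "nat \<Rightarrow> nat \<Rightarrow> nat \<Rightarrow> nat list \<Rightarrow> nat \<Rightarrow> real" where
  "g_prob n \<alpha> \<beta> s l = measure_pmf.prob (switch_pmf n s)
     {S. (\<forall>i<\<alpha>+\<beta>. \<not> final_on (\<lambda>_. False) S i)
       \<and> (\<forall>i<\<alpha>. i \<notin> S ! (l - 1))
       \<and> (\<forall>i. \<alpha> \<le> i \<and> i < \<alpha>+\<beta> \<longrightarrow> i \<in> S ! (l - 1))}"

definition remove_stage :: "nat \<Rightarrow> nat list \<Rightarrow> nat list" where
  "remove_stage l s = take (l - 1) s @ drop l s"

definition falling :: "nat \<Rightarrow> nat \<Rightarrow> real" where
  "falling x t = (\<Prod>i<t. (real x - real i))"

definition lambda_s :: "nat \<Rightarrow> nat \<Rightarrow> nat \<Rightarrow> real" where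
  "lambda_s n j s = (\<Sum>t\<le>j. real (j choose t) * (-2) ^ t * falling s t / falling n t)"

definition lambda_pat :: "nat \<Rightarrow> nat \<Rightarrow> nat list \<Rightarrow> real" where
  "lambda_pat n j t = (\<Prod>r<length t. lambda_s n j (t ! r))"

definition p_ab :: "nat \<Rightarrow> nat \<Rightarrow> nat \<Rightarrow> nat list \<Rightarrow> nat \<Rightarrow> real" where
  "p_ab n \<alpha> \<beta> s l = falling (n - s ! (l - 1)) \<alpha> * falling (s ! (l - 1)) \<beta> / falling n (\<alpha> + \<beta>)"

text \<open>a_{alpha,beta}(j); with b = alpha+beta. At j = 0 the term with a(j-1) has
  coefficient 0, so the nat truncation j-1 is harmless.\<close>
fun a_seq :: "nat \<Rightarrow> nat \<Rightarrow> nat \<Rightarrow> real" where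
  "a_seq \<alpha> 0 j = 1"
| "a_seq \<alpha> (Suc \<beta>) j =
     (real (\<alpha> + Suc \<beta>) - real j) / real (\<alpha> + Suc \<beta>) * a_seq \<alpha> \<beta> j
     - real j / real (\<alpha> + Suc \<beta>) * a_seq \<alpha> \<beta> (j - 1)"

end

theory Submission
  imports Defs
begin


definition subs :: "nat \<Rightarrow> nat \<Rightarrow> nat set set" where
  "subs n x = {A. A \<subseteq> {..<n} \<and> card A = x}"

lemma finite_subs: "finite (subs n x)"
  unfolding subs_def by (rule finite_subset[of _ "Pow {..<n}"]) auto

lemma card_subs: "card (subs n x) = n choose x"
  unfolding subs_def using n_subsets[of "{..<n}" x] by simp

lemma space_Nil: "switch_space n [] = {[]}"
  by (auto simp: switch_space_def)

lemma space_Cons: "switch_space n (x # xs) = (\<lambda>(A,Q). A # Q) ` (subs n x \<times> switch_space n xs)"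
proof (rule set_eqI)
  fix S
  show "S \<in> switch_space n (x # xs) \<longleftrightarrow> S \<in> (\<lambda>(A,Q). A # Q) ` (subs n x \<times> switch_space n xs)"
  proof
    assume S: "S \<in> switch_space n (x # xs)"
    then obtain A Q where SAQ: "S = A # Q" by (cases S) (auto simp: switch_space_def)
    have "A \<in> subs n x" using S SAQ by (force simp: switch_space_def subs_def)
    moreover have "Q \<in> switch_space n xs" using S SAQ by (force simp: switch_space_def)
    ultimately show "S \<in> (\<lambda>(A,Q). A # Q) ` (subs n x \<times> switch_space n xs)" using SAQ by force
  next
    assume "S \<in> (\<lambda>(A,Q). A # Q) ` (subs n x \<times> switch_space n xs)"
    then obtain A Q where SAQ: "S = A # Q" "A \<in> subs n x" "Q \<in> switch_space n xs" by auto
    then show "S \<in> switch_space n (x # xs)"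
      by (auto simp: switch_space_def subs_def nth_Cons split: nat.splits)
  qed
qed

lemma inj_Cons2: "inj_on (\<lambda>(A,Q). A # Q) X" by (auto simp: inj_on_def)

lemma sum_space_Cons:
  "(\<Sum>S\<in>switch_space n (x # xs). F S) = (\<Sum>A\<in>subs n x. \<Sum>Q\<in>switch_space n xs. F (A # Q))"
  unfolding space_Cons
  by (subst sum.reindex[OF inj_Cons2]) (simp add: sum.cartesian_product case_prod_beta)

lemma finite_space: "finite (switch_space n t)"
  by (induction t) (auto simp: space_Nil space_Cons finite_subs)

lemma subs_ne: "x \<le> n \<Longrightarrow> subs n x \<noteq> {}"
  using card_subs[of n x] by (metis card.empty zero_less_binomial_iff less_numeral_extra(3) not_less)

lemma space_ne: "\<forall>r<length t. t ! r \<le> n \<Longrightarrow> switch_space n t \<noteq> {}"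
proof (induction t)
  case Nil then show ?case by (simp add: space_Nil)
next
  case (Cons x xs)
  then have "x \<le> n" "\<forall>r<length xs. xs ! r \<le> n" by (auto dest: spec[of _ 0] spec[of _ "Suc _"]) 
  with Cons subs_ne show ?case by (auto simp: space_Cons)
qed

lemma space_append: "switch_space n (xs @ ys) = (\<lambda>(P,Q). P @ Q) ` (switch_space n xs \<times> switch_space n ys)"
proof (induction xs)
  case Nil then show ?case by (auto simp: space_Nil image_iff)
next
  case (Cons x xs)
  show ?case
  proof (rule set_eqI, rule iffI)
    fix S assume "S \<in> switch_space n ((x # xs) @ ys)"
    then obtain A R where AR: "S = A # R" "A \<in> subs n x" "R \<in> switch_space n (xs @ ys)"
      unfolding append_Cons space_Cons by auto
    then obtain P Q where PQ: "R = P @ Q" "P \<in> switch_space n xs" "Q \<in> switch_space n ys"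
      unfolding Cons by auto
    have "A # P \<in> switch_space n (x # xs)" unfolding space_Cons using AR PQ by auto
    then show "S \<in> (\<lambda>(P,Q). P @ Q) ` (switch_space n (x # xs) \<times> switch_space n ys)"
      using AR PQ by (intro image_eqI[of _ _ "(A # P, Q)"]) auto
  next
    fix S assume "S \<in> (\<lambda>(P,Q). P @ Q) ` (switch_space n (x # xs) \<times> switch_space n ys)"
    then obtain P Q where PQ: "S = P @ Q" "P \<in> switch_space n (x # xs)" "Q \<in> switch_space n ys" by auto
    then obtain A P' where AP: "P = A # P'" "A \<in> subs n x" "P' \<in> switch_space n xs"
      unfolding space_Cons by auto
    have "P' @ Q \<in> switch_space n (xs @ ys)" unfolding Cons using AP PQ by auto
    then show "S \<in> switch_space n ((x # xs) @ ys)"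
      unfolding append_Cons space_Cons using AP PQ by (auto simp: image_iff intro!: bexI[of _ "(A, P' @ Q)"])
  qed
qed

lemma sum_space_append:
  "(\<Sum>S\<in>switch_space n (xs @ ys). F S) = (\<Sum>P\<in>switch_space n xs. \<Sum>Q\<in>switch_space n ys. F (P @ Q))"
proof -
  have "inj_on (\<lambda>(P,Q). P @ Q) (switch_space n xs \<times> switch_space n ys)"
    by (auto simp: inj_on_def switch_space_def)
  then show ?thesis unfolding space_append
    by (subst sum.reindex) (simp_all add: sum.cartesian_product case_prod_beta)
qed

lemma toggles_Nil[simp]: "toggles [] i = 0" by (simp add: toggles_def)
lemma toggles_Cons[simp]: "toggles (A # Q) i = (if i \<in> A then 1 else 0) + toggles Q i"
  by (simp add: toggles_def)
lemma toggles_append[simp]: "toggles (P @ Q) i = toggles P i + toggles Q i"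
  by (simp add: toggles_def)

lemma prob_switch:
  assumes "\<forall>r<length t. t ! r \<le> n"
  shows "measure_pmf.prob (switch_pmf n t) {S. P S} =
     (\<Sum>S\<in>switch_space n t. if P S then 1 else 0) / real (card (switch_space n t))"
proof -
  have "measure_pmf.prob (switch_pmf n t) {S. P S} = card (switch_space n t \<inter> {S. P S}) / card (switch_space n t)"
    unfolding switch_pmf_def using space_ne[OF assms] finite_space by (rule measure_pmf_of_set)
  also have "real (card (switch_space n t \<inter> {S. P S})) = (\<Sum>S\<in>switch_space n t. if P S then 1 else 0)"
    using finite_space[of n t] by (simp add: sum.If_cases Int_def)
  finally show ?thesis .
qed

lemma card_space_Cons: "real (card (switch_space n (x#xs))) = real (n choose x) * real (card (switch_space n xs))"
  using sum_space_Cons[where F="\<lambda>_. 1::real" and n=n and x=x and xs=xs] finite_subs[of n x] card_subs[of n x] by simp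

lemma card_space_append: "real (card (switch_space n (xs@ys))) = real (card (switch_space n xs)) * real (card (switch_space n ys))"
  using sum_space_append[where F="\<lambda>_. 1::real" and n=n and xs=xs and ys=ys] by simp



lemma falling_zero: "m < t \<Longrightarrow> falling m t = 0"
  unfolding falling_def by (auto intro!: prod_zero bexI[of _ m])

lemma falling_Suc: "falling m (Suc t) = falling m t * (real m - real t)"
  unfolding falling_def by simp

lemma falling_fact: "t \<le> m \<Longrightarrow> falling m t = fact m / fact (m - t)"
proof (induction t)
  case 0 then show ?case by (simp add: falling_def)
next
  case (Suc t)
  then have "m - t = Suc (m - Suc t)" by simp
  then have "fact (m - t) = real (m - t) * (fact (m - Suc t) :: real)"
    by (metis fact_Suc of_nat_Suc)
  with Suc show ?case by (simp add: falling_Suc of_nat_diff field_simps)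
qed

lemma falling_0[simp]: "falling m 0 = 1" by (simp add: falling_def)

lemma count_ident:
  assumes "\<alpha> + \<beta> \<le> n" "x \<le> n"
  shows "real (if \<beta> \<le> x then (n - \<alpha> - \<beta>) choose (x - \<beta>) else 0) * falling n (\<alpha> + \<beta>)
         = real (n choose x) * falling (n - x) \<alpha> * falling x \<beta>"
proof (cases "\<beta> \<le> x")
  case False then show ?thesis by (simp add: falling_zero)
next
  case True
  show ?thesis
  proof (cases "\<alpha> \<le> n - x")
    case False
    then have "(n - \<alpha> - \<beta>) choose (x - \<beta>) = 0" using True assms by (intro binomial_eq_0) arith
    with True False show ?thesis by (simp add: falling_zero)
  next
    case a: True
    have e: "n - \<alpha> - \<beta> - (x - \<beta>) = n - x - \<alpha>" using True a by simp
    have "real ((n - \<alpha> - \<beta>) choose (x - \<beta>)) = fact (n - \<alpha> - \<beta>) / (fact (x - \<beta>) * fact (n - x - \<alpha>))"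
    proof -
      have le: "x - \<beta> \<le> n - \<alpha> - \<beta>" using True a assms by arith
      show ?thesis using binomial_fact[OF le] e by simp
    qed
    moreover have "real (n choose x) = fact n / (fact x * fact (n - x))"
      using binomial_fact[of x n] assms by simp
    moreover have "falling n (\<alpha> + \<beta>) = fact n / fact (n - \<alpha> - \<beta>)"
      using falling_fact[of "\<alpha>+\<beta>" n] assms by (simp add: diff_diff_add)
    moreover have "falling (n - x) \<alpha> = fact (n - x) / fact (n - x - \<alpha>)"
      using falling_fact a by simp
    moreover have "falling x \<beta> = fact x / fact (x - \<beta>)"
      using falling_fact True by simp
    ultimately show ?thesis using True by simp
  qed
qed

lemma count_sub:
  assumes X: "X \<subseteq> {..<n}" and Y: "Y \<subseteq> {..<n}" and XY: "X \<inter> Y = {}"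
  shows "card {A \<in> subs n x. Y \<subseteq> A \<and> A \<inter> X = {}} =
         (if card Y \<le> x then (n - card X - card Y) choose (x - card Y) else 0)"
proof (cases "card Y \<le> x")
  case False
  have E: "{A \<in> subs n x. Y \<subseteq> A \<and> A \<inter> X = {}} = {}"
  proof (rule ccontr)
    assume "{A \<in> subs n x. Y \<subseteq> A \<and> A \<inter> X = {}} \<noteq> {}"
    then obtain A where "A \<in> subs n x" "Y \<subseteq> A" by auto
    then have "card Y \<le> x" unfolding subs_def
      by (metis (mono_tags, lifting) card_mono finite_lessThan finite_subset mem_Collect_eq)
    with False show False by simp
  qed
  show ?thesis using False by (simp only: E) simp
next
  case True
  have fY: "finite Y" "finite X" using X Y finite_subset by auto
  let ?M = "{..<n} - X - Y"
  have "{A \<in> subs n x. Y \<subseteq> A \<and> A \<inter> X = {}} = (\<lambda>B. B \<union> Y) ` {B. B \<subseteq> ?M \<and> card B = x - card Y}"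
  proof (rule set_eqI, rule iffI)
    fix A assume A: "A \<in> {A \<in> subs n x. Y \<subseteq> A \<and> A \<inter> X = {}}"
    then have fA: "finite A" unfolding subs_def using finite_subset by auto
    have "card (A - Y) = x - card Y" using A fA by (simp add: subs_def card_Diff_subset fY)
    moreover have "A - Y \<subseteq> ?M" using A by (auto simp: subs_def)
    moreover have "A = (A - Y) \<union> Y" using A by auto
    ultimately show "A \<in> (\<lambda>B. B \<union> Y) ` {B. B \<subseteq> ?M \<and> card B = x - card Y}" by blast
  next
    fix A assume "A \<in> (\<lambda>B. B \<union> Y) ` {B. B \<subseteq> ?M \<and> card B = x - card Y}"
    then obtain B where B: "A = B \<union> Y" "B \<subseteq> ?M" "card B = x - card Y" by auto
    have fB: "finite B" by (rule finite_subset[OF B(2)]) auto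
    have "card A = x" using B True fB fY by (subst B(1), subst card_Un_disjoint) auto
    then show "A \<in> {A \<in> subs n x. Y \<subseteq> A \<and> A \<inter> X = {}}" using B Y XY by (auto simp: subs_def)
  qed
  moreover have "inj_on (\<lambda>B. B \<union> Y) {B. B \<subseteq> ?M \<and> card B = x - card Y}"
    by (rule inj_onI) blast
  moreover have "card ?M = n - card X - card Y"
  proof -
    have "Y \<subseteq> {..<n} - X" using Y XY by auto
    then have "card ?M = card ({..<n} - X) - card Y" using fY by (simp add: card_Diff_subset)
    also have "card ({..<n} - X) = n - card X" using X fY by (simp add: card_Diff_subset)
    finally show ?thesis by simp
  qed
  ultimately show ?thesis using True
    by (simp add: card_image n_subsets)
qed



lemma pow_insert_sum:
  assumes "finite F" "x \<notin> F"
  shows "(\<Sum>T\<in>Pow (insert x F). g T) = (\<Sum>T\<in>Pow F. g T) + (\<Sum>T\<in>Pow F. g (insert x T))"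
proof -
  have d: "Pow F \<inter> insert x ` Pow F = {}" using assms by auto
  have i: "inj_on (insert x) (Pow F)" using assms by (auto simp: inj_on_def) 
  show ?thesis unfolding Pow_insert
    using assms d i by (simp add: sum.union_disjoint sum.reindex)
qed

lemma group_card:
  fixes h :: "nat \<Rightarrow> real"
  assumes "finite A"
  shows "(\<Sum>T\<in>Pow A. h (card T)) = (\<Sum>j\<le>card A. real (card A choose j) * h j)"
  using assms
proof (induction A arbitrary: h rule: finite_induct)
  case empty then show ?case by simp
next
  case (insert x F)
  let ?m = "card F"
  have "(\<Sum>T\<in>Pow (insert x F). h (card T)) = (\<Sum>T\<in>Pow F. h (card T)) + (\<Sum>T\<in>Pow F. h (Suc (card T)))"
    using insert by (simp add: pow_insert_sum) (intro sum.cong refl, metis PowD card_insert_disjoint finite_subset subset_iff)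
  also have "\<dots> = (\<Sum>j\<le>?m. real (?m choose j) * h j) + (\<Sum>j\<le>?m. real (?m choose j) * h (Suc j))"
    using insert.IH[of h] insert.IH[of "\<lambda>j. h (Suc j)"] by simp
  also have "(\<Sum>j\<le>?m. real (?m choose j) * h j) = (\<Sum>j\<le>Suc ?m. real (?m choose j) * h j)"
    by simp
  also have "\<dots> = h 0 + (\<Sum>j\<le>?m. real (?m choose Suc j) * h (Suc j))"
    by (subst sum.atMost_Suc_shift) simp
  finally have "(\<Sum>T\<in>Pow (insert x F). h (card T)) =
      h 0 + (\<Sum>j\<le>?m. (real (?m choose Suc j) + real (?m choose j)) * h (Suc j))"
    by (simp add: sum.distrib algebra_simps)
  also have "\<dots> = (\<Sum>j\<le>Suc ?m. real (Suc ?m choose j) * h j)"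
    by (subst sum.atMost_Suc_shift) (simp add: add.commute)
  finally show ?case using insert by simp
qed

lemma neg1_card: "finite T \<Longrightarrow> (-1::real) ^ card (A \<inter> T) = (\<Prod>i\<in>T. (if i \<in> A then -2 else 0) + 1)"
proof -
  assume fT: "finite T"
  have "(\<Prod>i\<in>T. (if i \<in> A then -2 else 0) + 1) = (\<Prod>i\<in>T. if i \<in> A then (-1::real) else 1)"
    by (intro prod.cong) auto
  also have "\<dots> = (-1) ^ card (T \<inter> {i. i \<in> A})"
    using fT by (simp add: prod.If_cases)
  finally show ?thesis by (simp add: Int_commute Int_def)
qed

lemma prod_sub: "finite U \<Longrightarrow> (\<Prod>i\<in>U. if i \<in> A then (-2::real) else 0) = (if U \<subseteq> A then (-2) ^ card U else 0)"
proof (cases "U \<subseteq> A")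
  case True
  assume "finite U"
  then show ?thesis using True by (subst prod.cong[OF refl, of _ _ "\<lambda>_. -2"]) auto
next
  case False
  assume "finite U"
  then obtain i where "i \<in> U" "i \<notin> A" using False by auto
  then show ?thesis using False \<open>finite U\<close> by (auto intro!: prod_zero bexI[of _ i])
qed

lemma falling_pos: "t \<le> m \<Longrightarrow> falling m t > 0"
  by (simp add: falling_fact)

lemma L1:
  assumes T: "T \<subseteq> {..<n}" and x: "x \<le> n"
  shows "(\<Sum>A\<in>subs n x. (-1::real) ^ card (A \<inter> T)) = real (n choose x) * lambda_s n (card T) x"
proof -
  have fT: "finite T" using T finite_subset by auto
  have cT: "card T \<le> n" using T by (metis card_lessThan card_mono finite_lessThan)
  define N where "N u = (if u \<le> x then (n - 0 - u) choose (x - u) else 0)" for u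
  have "(\<Sum>A\<in>subs n x. (-1::real) ^ card (A \<inter> T)) =
        (\<Sum>A\<in>subs n x. \<Sum>U\<in>Pow T. if U \<subseteq> A then (-2) ^ card U else 0)"
  proof (intro sum.cong refl)
    fix A
    have "(-1::real) ^ card (A \<inter> T) = (\<Sum>U\<in>Pow T. (\<Prod>i\<in>U. if i \<in> A then -2 else 0) * (\<Prod>i\<in>T - U. 1))"
      unfolding neg1_card[OF fT] by (rule prod_add[OF fT])
    also have "\<dots> = (\<Sum>U\<in>Pow T. if U \<subseteq> A then (-2) ^ card U else 0)"
      using fT by (intro sum.cong refl) (simp add: prod_sub finite_subset)
    finally show "(-1::real) ^ card (A \<inter> T) = (\<Sum>U\<in>Pow T. if U \<subseteq> A then (-2) ^ card U else 0)" .
  qed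
  also have "\<dots> = (\<Sum>U\<in>Pow T. \<Sum>A\<in>subs n x. if U \<subseteq> A then (-2) ^ card U else 0)"
    by (rule sum.swap)
  also have "\<dots> = (\<Sum>U\<in>Pow T. (-2) ^ card U * real (N (card U)))"
  proof (intro sum.cong refl)
    fix U assume U: "U \<in> Pow T"
    have "card {A \<in> subs n x. U \<subseteq> A \<and> A \<inter> {} = {}} = N (card U)"
      using count_sub[of "{}" n U x] U T unfolding N_def by auto
    then have "card {A \<in> subs n x. U \<subseteq> A} = N (card U)" by simp
    then show "(\<Sum>A\<in>subs n x. if U \<subseteq> A then (-2::real) ^ card U else 0) = (-2) ^ card U * real (N (card U))"
      using finite_subs[of n x] by (simp add: sum.If_cases Int_def)
  qed
  also have "\<dots> = (\<Sum>u\<le>card T. real (card T choose u) * ((-2) ^ u * real (N u)))"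
    by (rule group_card[OF fT])
  also have "\<dots> = (\<Sum>u\<le>card T. real (n choose x) * (real (card T choose u) * (-2) ^ u * falling x u / falling n u))"
  proof (intro sum.cong refl)
    fix u assume "u \<in> {..card T}"
    then have u: "u \<le> n" using cT by simp
    have "real (N u) * falling n (0 + u) = real (n choose x) * falling (n - x) 0 * falling x u"
      unfolding N_def by (rule count_ident) (use u x in auto)
    then have "real (N u) = real (n choose x) * falling x u / falling n u"
      using falling_pos[OF u] by (simp add: field_simps)
    then show "real (card T choose u) * ((-2) ^ u * real (N u)) =
       real (n choose x) * (real (card T choose u) * (-2) ^ u * falling x u / falling n u)" by simp
  qed
  also have "\<dots> = real (n choose x) * lambda_s n (card T) x"
    unfolding lambda_s_def by (simp add: sum_distrib_left)
  finally show ?thesis .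
qed

lemma lambda_pat_Cons: "lambda_pat n j (x # xs) = lambda_s n j x * lambda_pat n j xs"
  unfolding lambda_pat_def length_Cons prod.lessThan_Suc_shift by simp

lemma L:
  assumes "\<forall>r<length t. t ! r \<le> n" and T: "T \<subseteq> {..<n}"
  shows "(\<Sum>R\<in>switch_space n t. (-1::real) ^ (\<Sum>i\<in>T. toggles R i))
         = real (card (switch_space n t)) * lambda_pat n (card T) t"
  using assms(1)
proof (induction t)
  case Nil then show ?case by (simp add: space_Nil lambda_pat_def)
next
  case (Cons x xs)
  then have x: "x \<le> n" and xs: "\<forall>r<length xs. xs ! r \<le> n"
    by (auto dest: spec[of _ 0] spec[of _ "Suc _"])
  have fT: "finite T" using T finite_subset by auto
  have "(\<Sum>R\<in>switch_space n (x # xs). (-1::real) ^ (\<Sum>i\<in>T. toggles R i))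
     = (\<Sum>A\<in>subs n x. \<Sum>Q\<in>switch_space n xs. (-1) ^ card (A \<inter> T) * (-1) ^ (\<Sum>i\<in>T. toggles Q i))"
    unfolding sum_space_Cons
  proof (intro sum.cong refl)
    fix A Q
    have "(\<Sum>i\<in>T. toggles (A # Q) i) = card (A \<inter> T) + (\<Sum>i\<in>T. toggles Q i)"
      using fT by (simp add: sum.distrib sum.If_cases Int_def conj_commute)
    then show "(-1::real) ^ (\<Sum>i\<in>T. toggles (A # Q) i) = (-1) ^ card (A \<inter> T) * (-1) ^ (\<Sum>i\<in>T. toggles Q i)"
      by (simp add: power_add)
  qed
  also have "\<dots> = (\<Sum>A\<in>subs n x. (-1) ^ card (A \<inter> T)) * (real (card (switch_space n xs)) * lambda_pat n (card T) xs)"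
    by (simp add: sum_distrib_left[symmetric] sum_distrib_right Cons.IH[OF xs])
  also have "\<dots> = real (card (switch_space n (x # xs))) * lambda_pat n (card T) (x # xs)"
    by (simp add: L1[OF T x] card_space_Cons lambda_pat_Cons)
  finally show ?case .
qed



lemma a_rec:
  "real (Suc (\<alpha> + \<beta>) choose j) * a_seq \<alpha> (Suc \<beta>) j =
   real ((\<alpha> + \<beta>) choose j) * a_seq \<alpha> \<beta> j
   - (if j = 0 then 0 else real ((\<alpha> + \<beta>) choose (j - 1)) * a_seq \<alpha> \<beta> (j - 1))"
proof -
  let ?b = "\<alpha> + \<beta>"
  have e1: "real (Suc ?b choose j) * (real (Suc ?b) - real j) = real (Suc ?b) * real (?b choose j)"
  proof (cases "j \<le> Suc ?b")
    case True
    have "(Suc ?b - j) * (Suc ?b choose j) = Suc ?b * (?b choose j)"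
      using binomial_absorb_comp[of "Suc ?b" j] by simp
    have "real (Suc ?b choose j) * (real (Suc ?b) - real j) = real ((Suc ?b - j) * (Suc ?b choose j))"
      by (simp only: of_nat_mult of_nat_diff[OF True]) (rule mult.commute)
    also have "\<dots> = real (Suc ?b * (?b choose j))" using \<open>(Suc ?b - j) * (Suc ?b choose j) = Suc ?b * (?b choose j)\<close> by (simp only:)
    also have "\<dots> = real (Suc ?b) * real (?b choose j)" by (simp only: of_nat_mult)
    finally show ?thesis .
  next
    case False then show ?thesis by (simp add: binomial_eq_0)
  qed
  have e2: "real (Suc ?b choose j) * real j = real (Suc ?b) * (if j = 0 then 0 else real (?b choose (j - 1)))"
  proof (cases j)
    case 0 then show ?thesis by simp
  next
    case (Suc k)
    have "Suc k * (Suc ?b choose Suc k) = Suc ?b * (?b choose k)"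
      using binomial_absorption[of k "Suc ?b"] by simp
    then have "real (Suc k * (Suc ?b choose Suc k)) = real (Suc ?b * (?b choose k))" by (simp only:)
    then have "real (Suc k) * real (Suc ?b choose Suc k) = real (Suc ?b) * real (?b choose k)" by (simp only: of_nat_mult)
    then show ?thesis using Suc by (simp del: of_nat_Suc binomial_Suc_Suc add: mult.commute)
  qed
  have "real (Suc ?b choose j) * a_seq \<alpha> (Suc \<beta>) j =
     (real (Suc ?b choose j) * (real (Suc ?b) - real j)) / real (Suc ?b) * a_seq \<alpha> \<beta> j
     - (real (Suc ?b choose j) * real j) / real (Suc ?b) * a_seq \<alpha> \<beta> (j - 1)"
    by (simp add: algebra_simps)
  also have "\<dots> = real (?b choose j) * a_seq \<alpha> \<beta> j
     - (if j = 0 then 0 else real (?b choose (j - 1))) * a_seq \<alpha> \<beta> (j - 1)"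
    unfolding e1 e2 by (simp del: of_nat_Suc)
  finally show ?thesis by simp
qed

lemma kraw:
  fixes h :: "nat \<Rightarrow> real"
  shows "(\<Sum>T\<in>Pow {..<\<alpha>+\<beta>}. (-1) ^ card (T \<inter> {\<alpha>..<\<alpha>+\<beta>}) * h (card T))
       = (\<Sum>j\<le>\<alpha>+\<beta>. real ((\<alpha>+\<beta>) choose j) * a_seq \<alpha> \<beta> j * h j)"
proof (induction \<beta> arbitrary: h)
  case 0
  show ?case using group_card[of "{..<\<alpha>}" h] by simp
next
  case (Suc \<beta>)
  let ?b = "\<alpha> + \<beta>"
  define D where "D j = real (?b choose j) * a_seq \<alpha> \<beta> j" for j
  define F where "F T = (-1::real) ^ card (T \<inter> {\<alpha>..<Suc ?b}) * h (card T)" for T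
  have c1: "F T = (-1) ^ card (T \<inter> {\<alpha>..<?b}) * h (card T)" if "T \<in> Pow {..<?b}" for T
  proof -
    have "T \<inter> {\<alpha>..<Suc ?b} = T \<inter> {\<alpha>..<?b}" using that by auto
    then show ?thesis unfolding F_def by simp
  qed
  have c2: "F (insert ?b T) = - ((-1) ^ card (T \<inter> {\<alpha>..<?b}) * h (Suc (card T)))" if "T \<in> Pow {..<?b}" for T
  proof -
    have "insert ?b T \<inter> {\<alpha>..<Suc ?b} = insert ?b (T \<inter> {\<alpha>..<?b})" using that by auto
    moreover have "finite T" using that finite_subset by auto
    moreover have "?b \<notin> T" using that by auto
    ultimately show ?thesis unfolding F_def by simp
  qed
  have "(\<Sum>T\<in>Pow {..<\<alpha>+Suc \<beta>}. (-1) ^ card (T \<inter> {\<alpha>..<\<alpha>+Suc \<beta>}) * h (card T))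
     = (\<Sum>T\<in>Pow {..<Suc ?b}. F T)" unfolding F_def by simp
  also have "\<dots> = (\<Sum>T\<in>Pow {..<?b}. F T) + (\<Sum>T\<in>Pow {..<?b}. F (insert ?b T))"
    unfolding lessThan_Suc by (rule pow_insert_sum) auto
  also have "\<dots> = (\<Sum>T\<in>Pow {..<?b}. (-1) ^ card (T \<inter> {\<alpha>..<?b}) * h (card T))
       - (\<Sum>T\<in>Pow {..<?b}. (-1) ^ card (T \<inter> {\<alpha>..<?b}) * h (Suc (card T)))"
    by (simp add: c1 c2 sum_negf)
  also have "\<dots> = (\<Sum>j\<le>?b. D j * h j) - (\<Sum>j\<le>?b. D j * h (Suc j))"
    unfolding D_def using Suc.IH[of h] Suc.IH[of "\<lambda>j. h (Suc j)"] by simp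
  also have "(\<Sum>j\<le>?b. D j * h j) = (\<Sum>j\<le>Suc ?b. D j * h j)"
    by (simp add: D_def binomial_eq_0)
  also have "(\<Sum>j\<le>?b. D j * h (Suc j)) = (\<Sum>j\<le>Suc ?b. (if j = 0 then 0 else D (j - 1)) * h j)"
    by (subst sum.atMost_Suc_shift) simp
  also have "(\<Sum>j\<le>Suc ?b. D j * h j) - (\<Sum>j\<le>Suc ?b. (if j = 0 then 0 else D (j - 1)) * h j)
     = (\<Sum>j\<le>Suc ?b. real (Suc ?b choose j) * a_seq \<alpha> (Suc \<beta>) j * h j)"
    unfolding sum_subtractf[symmetric] a_rec D_def by (intro sum.cong refl) (simp add: algebra_simps)
  finally show ?case by simp
qed



lemma prod_indicator:
  "finite I \<Longrightarrow> (\<Prod>i\<in>I. if P i then (1::real) else 0) = (if \<forall>i\<in>I. P i then 1 else 0)"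
  by (induction I rule: finite_induct) auto

lemma f_formula:
  assumes t: "\<forall>r<length t. t ! r \<le> n" and ab: "\<alpha> + \<beta> \<le> n"
  shows "f_prob n \<alpha> \<beta> t = 1 / 2 ^ (\<alpha> + \<beta>) *
     (\<Sum>j\<le>\<alpha> + \<beta>. real ((\<alpha> + \<beta>) choose j) * a_seq \<alpha> \<beta> j * lambda_pat n j t)"
proof -
  let ?b = "\<alpha> + \<beta>"
  let ?\<Omega> = "switch_space n t"
  let ?c = "\<lambda>T. card (T \<inter> {\<alpha>..<?b})"
  let ?tg = "\<lambda>R T. \<Sum>i\<in>T. toggles R i"
  have ind: "(if \<forall>i<?b. \<not> final_on (\<lambda>i. \<alpha> \<le> i) R i then 1 else 0)
     = (1/2) ^ ?b * (\<Sum>T\<in>Pow {..<?b}. (-1::real) ^ ?c T * (-1) ^ ?tg R T)" for R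
  proof -
    define m where "m i = (if \<alpha> \<le> i then 1 else 0) + toggles R i" for i
    have "(if \<forall>i<?b. \<not> final_on (\<lambda>i. \<alpha> \<le> i) R i then 1 else 0)
        = (\<Prod>i\<in>{..<?b}. if even (m i) then (1::real) else 0)"
      by (subst prod_indicator) (auto simp: final_on_def m_def)
    also have "\<dots> = (\<Prod>i\<in>{..<?b}. (1/2) * ((-1) ^ m i + 1))"
      by (intro prod.cong refl) auto
    also have "\<dots> = (1/2) ^ ?b * (\<Prod>i\<in>{..<?b}. (-1) ^ m i + 1)"
      by (simp only: prod.distrib prod_constant card_lessThan)
    also have "(\<Prod>i\<in>{..<?b}. (-1::real) ^ m i + 1) = (\<Sum>T\<in>Pow {..<?b}. (\<Prod>i\<in>T. (-1) ^ m i) * (\<Prod>i\<in>{..<?b} - T. 1))"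
      by (rule prod_add) simp
    also have "\<dots> = (\<Sum>T\<in>Pow {..<?b}. (-1::real) ^ ?c T * (-1) ^ ?tg R T)"
    proof (intro sum.cong refl)
      fix T assume T: "T \<in> Pow {..<?b}"
      then have fT: "finite T" using finite_subset by auto
      have "(\<Sum>i\<in>T. m i) = ?c T + ?tg R T"
      proof -
        have "(\<Sum>i\<in>T. (if \<alpha> \<le> i then 1 else 0::nat)) = card (T \<inter> {i. \<alpha> \<le> i})"
          using fT by (simp add: sum.If_cases Int_def)
        also have "T \<inter> {i. \<alpha> \<le> i} = T \<inter> {\<alpha>..<?b}" using T by auto
        finally show ?thesis unfolding m_def by (simp add: sum.distrib)
      qed
      then show "(\<Prod>i\<in>T. (-1::real) ^ m i) * (\<Prod>i\<in>{..<?b} - T. 1) = (-1) ^ ?c T * (-1) ^ ?tg R T"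
        by (simp add: power_sum[symmetric] power_add)
    qed
    finally show ?thesis .
  qed
  have ne: "real (card ?\<Omega>) \<noteq> 0" using space_ne[OF t] finite_space by auto
  have "f_prob n \<alpha> \<beta> t = (\<Sum>R\<in>?\<Omega>. if \<forall>i<?b. \<not> final_on (\<lambda>i. \<alpha> \<le> i) R i then 1 else 0) / real (card ?\<Omega>)"
    unfolding f_prob_def by (rule prob_switch[OF t])
  also have "(\<Sum>R\<in>?\<Omega>. if \<forall>i<?b. \<not> final_on (\<lambda>i. \<alpha> \<le> i) R i then 1 else 0)
      = (1/2) ^ ?b * (\<Sum>T\<in>Pow {..<?b}. (-1::real) ^ ?c T * (\<Sum>R\<in>?\<Omega>. (-1) ^ ?tg R T))"
    unfolding ind by (simp add: sum_distrib_left sum_distrib_right sum.swap[of _ ?\<Omega>] mult.assoc)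
  also have "\<dots> = (1/2) ^ ?b * (\<Sum>T\<in>Pow {..<?b}. (-1::real) ^ ?c T * (real (card ?\<Omega>) * lambda_pat n (card T) t))"
  proof -
    have "(\<Sum>R\<in>?\<Omega>. (-1::real) ^ ?tg R T) = real (card ?\<Omega>) * lambda_pat n (card T) t" if "T \<in> Pow {..<?b}" for T
      by (rule L[OF t]) (use that ab in auto)
    then show ?thesis by simp
  qed
  also have "\<dots> = real (card ?\<Omega>) * ((1/2) ^ ?b * (\<Sum>T\<in>Pow {..<?b}. (-1::real) ^ ?c T * lambda_pat n (card T) t))"
    by (simp add: sum_distrib_left algebra_simps)
  finally show ?thesis using ne
    by (simp add: kraw[of \<alpha> \<beta> "\<lambda>j. lambda_pat n j t"] power_one_over)
qed



lemma g_formula: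
  assumes pattern: "\<forall>r<length s. s ! r \<le> n"
    and l: "1 \<le> l" "l \<le> length s"
    and ab: "\<alpha> + \<beta> \<le> n"
  shows "g_prob n \<alpha> \<beta> s l = f_prob n \<alpha> \<beta> (remove_stage l s) * p_ab n \<alpha> \<beta> s l"
proof -
  let ?b = "\<alpha> + \<beta>"
  define i where "i = l - 1"
  define xs where "xs = take i s"
  define x where "x = s ! i"
  define ys where "ys = drop l s"
  have il: "l = Suc i" "i < length s" using l unfolding i_def by auto
  have s_eq: "s = xs @ x # ys" unfolding xs_def x_def ys_def il(1) by (rule id_take_nth_drop[OF il(2)])
  have t_eq: "remove_stage l s = xs @ ys" unfolding remove_stage_def xs_def ys_def i_def ..
  have lenxs: "length xs = i" unfolding xs_def using il by simp
  have allS: "\<forall>y\<in>set s. y \<le> n" using pattern by (simp add: all_set_conv_all_nth)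
  have x: "x \<le> n" using allS s_eq by simp
  have t: "\<forall>r<length (xs @ ys). (xs @ ys) ! r \<le> n"
  proof -
    have "\<forall>y\<in>set (xs @ ys). y \<le> n" using allS s_eq by auto
    then show ?thesis by (simp only: all_set_conv_all_nth)
  qed
  let ?Ef = "\<lambda>R. \<forall>i<?b. \<not> final_on (\<lambda>i. \<alpha> \<le> i) R i"
  let ?Eg = "\<lambda>S. (\<forall>i<?b. \<not> final_on (\<lambda>_. False) S i) \<and> (\<forall>i<\<alpha>. i \<notin> S ! (l - 1))
       \<and> (\<forall>i. \<alpha> \<le> i \<and> i < ?b \<longrightarrow> i \<in> S ! (l - 1))"
  let ?good = "\<lambda>A. {\<alpha>..<?b} \<subseteq> A \<and> A \<inter> {..<\<alpha>} = {}"
  have key: "(if ?Eg (P @ A # Q) then 1 else 0) = (if ?good A then 1 else 0) * (if ?Ef (P @ Q) then (1::real) else 0)"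
    if P: "P \<in> switch_space n xs" for P A Q
  proof -
    have "length P = i" using P lenxs by (simp add: switch_space_def)
    then have nth: "(P @ A # Q) ! (l - 1) = A" using il by (simp add: nth_append)
    have g: "?good A \<longleftrightarrow> (\<forall>i<\<alpha>. i \<notin> A) \<and> (\<forall>i. \<alpha> \<le> i \<and> i < ?b \<longrightarrow> i \<in> A)" by auto
    show ?thesis
    proof (cases "?good A")
      case True
      then have "(if j \<in> A then 1 else 0) = (if \<alpha> \<le> j then 1 else (0::nat))" if "j < ?b" for j
        using that by auto
      then have "?Eg (P @ A # Q) \<longleftrightarrow> ?Ef (P @ Q)"
        using True unfolding nth g by (auto simp: final_on_def add.assoc add.left_commute)
      with True show ?thesis by simp
    next
      case False
      then show ?thesis unfolding nth g by auto
    qed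
  qed
  have "(\<Sum>S\<in>switch_space n s. if ?Eg S then 1 else 0) =
      (\<Sum>P\<in>switch_space n xs. \<Sum>A\<in>subs n x. \<Sum>Q\<in>switch_space n ys.
          (if ?good A then 1 else 0) * (if ?Ef (P @ Q) then (1::real) else 0))"
    unfolding s_eq sum_space_append sum_space_Cons by (intro sum.cong refl) (rule key)
  also have "\<dots> = (\<Sum>A\<in>subs n x. if ?good A then 1 else 0) *
      (\<Sum>P\<in>switch_space n xs. \<Sum>Q\<in>switch_space n ys. if ?Ef (P @ Q) then (1::real) else 0)"
    by (simp add: sum_distrib_left sum_distrib_right sum.swap[of _ "subs n x"])
  also have "(\<Sum>P\<in>switch_space n xs. \<Sum>Q\<in>switch_space n ys. if ?Ef (P @ Q) then (1::real) else 0)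
      = (\<Sum>R\<in>switch_space n (xs @ ys). if ?Ef R then 1 else 0)"
    by (simp add: sum_space_append)
  also have "(\<Sum>A\<in>subs n x. if ?good A then 1 else (0::real)) = real (card {A \<in> subs n x. {\<alpha>..<?b} \<subseteq> A \<and> A \<inter> {..<\<alpha>} = {}})"
    using finite_subs[of n x] by (simp add: sum.If_cases Int_def)
  also have "card {A \<in> subs n x. {\<alpha>..<?b} \<subseteq> A \<and> A \<inter> {..<\<alpha>} = {}} =
      (if \<beta> \<le> x then (n - \<alpha> - \<beta>) choose (x - \<beta>) else 0)"
  proof -
    have h1: "{..<\<alpha>} \<subseteq> {..<n}" "{\<alpha>..<?b} \<subseteq> {..<n}" "{..<\<alpha>} \<inter> {\<alpha>..<?b} = {}" using ab by auto
    show ?thesis using count_sub[OF h1, of x] by simp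
  qed
  finally have num: "(\<Sum>S\<in>switch_space n s. if ?Eg S then 1 else 0) =
      real (if \<beta> \<le> x then (n - \<alpha> - \<beta>) choose (x - \<beta>) else 0) *
      (\<Sum>R\<in>switch_space n (xs @ ys). if ?Ef R then 1 else 0)" .
  have cs: "real (card (switch_space n s)) = real (n choose x) * real (card (switch_space n (xs @ ys)))"
    unfolding s_eq card_space_append card_space_Cons by simp
  have id: "real (if \<beta> \<le> x then (n - \<alpha> - \<beta>) choose (x - \<beta>) else 0) / real (n choose x) = p_ab n \<alpha> \<beta> s l"
  proof -
    have "real (if \<beta> \<le> x then (n - \<alpha> - \<beta>) choose (x - \<beta>) else 0) * falling n ?b
        = real (n choose x) * falling (n - x) \<alpha> * falling x \<beta>" by (rule count_ident[OF ab x])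
    moreover have "falling n ?b > 0" using falling_pos ab by simp
    moreover have "real (n choose x) > 0" using x by simp
    ultimately show ?thesis unfolding p_ab_def x_def[symmetric] i_def[symmetric]
      by (simp add: field_simps)
  qed
  have "g_prob n \<alpha> \<beta> s l = (\<Sum>S\<in>switch_space n s. if ?Eg S then 1 else 0) / real (card (switch_space n s))"
    unfolding g_prob_def by (rule prob_switch[OF pattern])
  also have "\<dots> = ((\<Sum>R\<in>switch_space n (xs @ ys). if ?Ef R then 1 else 0) / real (card (switch_space n (xs @ ys))))
        * (real (if \<beta> \<le> x then (n - \<alpha> - \<beta>) choose (x - \<beta>) else 0) / real (n choose x))"
    unfolding num cs by (simp only: times_divide_times_eq mult.commute)
  also have "(\<Sum>R\<in>switch_space n (xs @ ys). if ?Ef R then 1 else 0) / real (card (switch_space n (xs @ ys)))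
      = f_prob n \<alpha> \<beta> (remove_stage l s)"
    unfolding f_prob_def t_eq by (rule prob_switch[OF t, symmetric])
  finally show ?thesis unfolding id .
qed


theorem corollary4p1:
  fixes n \<alpha> \<beta> l :: nat and s :: "nat list"
  assumes pattern: "\<forall>r<length s. s ! r \<le> n"
    and l: "1 \<le> l" "l \<le> length s"
    and ab: "\<alpha> + \<beta> \<le> n"
  shows "g_prob n \<alpha> \<beta> s l = f_prob n \<alpha> \<beta> (remove_stage l s) * p_ab n \<alpha> \<beta> s l
    \<and> f_prob n \<alpha> \<beta> (remove_stage l s) =
        1 / 2 ^ (\<alpha> + \<beta>) * (\<Sum>j\<le>\<alpha> + \<beta>. real ((\<alpha> + \<beta>) choose j) * a_seq \<alpha> \<beta> j
                                   * lambda_pat n j (remove_stage l s))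
    \<and> (\<forall>j::nat.
        (j \<le> 0 \<longrightarrow> a_seq 0 0 j = 1)
      \<and> (j \<le> 1 \<longrightarrow> a_seq 0 1 j = (-1) ^ j \<and> a_seq 1 0 j = 1)
      \<and> (j \<le> 2 \<longrightarrow> a_seq 0 2 j = (-1) ^ j \<and> a_seq 1 1 j = 1 - real j \<and> a_seq 2 0 j = 1)
      \<and> (j \<le> 3 \<longrightarrow> a_seq 0 3 j = (-1) ^ j \<and> a_seq 1 2 j = (-1) ^ j * (1 - 2 * real j / 3)
                 \<and> a_seq 2 1 j = 1 - 2 * real j / 3 \<and> a_seq 3 0 j = 1)
      \<and> (j \<le> 4 \<longrightarrow> a_seq 0 4 j = (-1) ^ j \<and> a_seq 1 3 j = (-1) ^ j * (1 - real j / 2)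
                 \<and> a_seq 2 2 j = 1 - real j * (4 - real j) / 3
                 \<and> a_seq 3 1 j = 1 - real j / 2 \<and> a_seq 4 0 j = 1))"
  proof (intro conjI)
  show "g_prob n \<alpha> \<beta> s l = f_prob n \<alpha> \<beta> (remove_stage l s) * p_ab n \<alpha> \<beta> s l"
    by (rule g_formula[OF pattern l ab])
  have allS: "\<forall>y\<in>set s. y \<le> n" using pattern by (simp add: all_set_conv_all_nth)
  have "\<forall>y\<in>set (remove_stage l s). y \<le> n"
    using allS unfolding remove_stage_def by (auto dest: in_set_takeD in_set_dropD)
  then have t: "\<forall>r<length (remove_stage l s). remove_stage l s ! r \<le> n"
    by (simp only: all_set_conv_all_nth)
  show "f_prob n \<alpha> \<beta> (remove_stage l s) =
        1 / 2 ^ (\<alpha> + \<beta>) * (\<Sum>j\<le>\<alpha> + \<beta>. real ((\<alpha> + \<beta>) choose j) * a_seq \<alpha> \<beta> j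
                                   * lambda_pat n j (remove_stage l s))"
    by (rule f_formula[OF t ab])
  show "\<forall>j::nat.
        (j \<le> 0 \<longrightarrow> a_seq 0 0 j = 1)
      \<and> (j \<le> 1 \<longrightarrow> a_seq 0 1 j = (-1) ^ j \<and> a_seq 1 0 j = 1)
      \<and> (j \<le> 2 \<longrightarrow> a_seq 0 2 j = (-1) ^ j \<and> a_seq 1 1 j = 1 - real j \<and> a_seq 2 0 j = 1)
      \<and> (j \<le> 3 \<longrightarrow> a_seq 0 3 j = (-1) ^ j \<and> a_seq 1 2 j = (-1) ^ j * (1 - 2 * real j / 3)
                 \<and> a_seq 2 1 j = 1 - 2 * real j / 3 \<and> a_seq 3 0 j = 1)
      \<and> (j \<le> 4 \<longrightarrow> a_seq 0 4 j = (-1) ^ j \<and> a_seq 1 3 j = (-1) ^ j * (1 - real j / 2)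
                 \<and> a_seq 2 2 j = 1 - real j * (4 - real j) / 3
                 \<and> a_seq 3 1 j = 1 - real j / 2 \<and> a_seq 4 0 j = 1)"
  proof
    fix j :: nat
    show "(j \<le> 0 \<longrightarrow> a_seq 0 0 j = 1)
      \<and> (j \<le> 1 \<longrightarrow> a_seq 0 1 j = (-1) ^ j \<and> a_seq 1 0 j = 1)
      \<and> (j \<le> 2 \<longrightarrow> a_seq 0 2 j = (-1) ^ j \<and> a_seq 1 1 j = 1 - real j \<and> a_seq 2 0 j = 1)
      \<and> (j \<le> 3 \<longrightarrow> a_seq 0 3 j = (-1) ^ j \<and> a_seq 1 2 j = (-1) ^ j * (1 - 2 * real j / 3)
                 \<and> a_seq 2 1 j = 1 - 2 * real j / 3 \<and> a_seq 3 0 j = 1)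
      \<and> (j \<le> 4 \<longrightarrow> a_seq 0 4 j = (-1) ^ j \<and> a_seq 1 3 j = (-1) ^ j * (1 - real j / 2)
                 \<and> a_seq 2 2 j = 1 - real j * (4 - real j) / 3
                 \<and> a_seq 3 1 j = 1 - real j / 2 \<and> a_seq 4 0 j = 1)"
    proof (cases "j \<le> 4")
      case False then show ?thesis by simp
    next
      case True
      then have "j = 0 \<or> j = 1 \<or> j = 2 \<or> j = 3 \<or> j = 4" by auto
      then show ?thesis by (elim disjE) (simp_all add: numeral_eq_Suc)
    qed
  qed
qed

end
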